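(* Consider $x_{i}=x_{i-1}+u_{i}$ (scalar), where $u_{i}$ has mean zero and positive finite long-run variance $\Sigma_{u}$, $E x_{0}^{2}<\infty$, and the strong approximation $\sup_{1\leq i\leq t}|x_{i}-W_{x}(i)|=O_{a.s.}(t^{1/2-\delta'})$ holds for some $0<\delta'<\frac{1}{2}$, with $W_{x}$ a Wiener process with increment variance $\Sigma_{u}$. Then there exist a random variable $m_{0}$ and a constant $0<c_{0}<\infty$ such that, for all $m\geq m_{0}$, $\sum_{i=1}^{m}x_{i}^{2}\geq c_{0}\frac{m^{2}}{\ln\ln m}$.
   Context: Univariate cointegrating regression setting $y_{i}=\beta x_{i}+\epsilon_{i}$, $x_{i}=x_{i-1}+u_{i}$. *)

theory Defs
  imports "HOL-Probability.Probability"
begin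

definition wiener_process :: "'a measure \<Rightarrow> real \<Rightarrow> (real \<Rightarrow> 'a \<Rightarrow> real) \<Rightarrow> bool" where
  "wiener_process M sigma2 W \<longleftrightarrow>
     prob_space M \<and>
     (\<forall>t\<ge>0. W t \<in> borel_measurable M) \<and>
     (AE \<omega> in M. W 0 \<omega> = 0) \<and>
     (AE \<omega> in M. continuous_on {0..} (\<lambda>t. W t \<omega>)) \<and>
     (\<forall>s t. 0 \<le> s \<and> s < t \<longrightarrow>
        distributed M lborel (\<lambda>\<omega>. W t \<omega> - W s \<omega>)
          (\<lambda>y. ennreal (normal_density 0 (sqrt (sigma2 * (t - s))) y))) \<and>
     (\<forall>(n::nat) (tt::nat \<Rightarrow> real). 0 \<le> tt 0 \<and> (\<forall>k<n. tt k < tt (Suc k)) \<longrightarrow>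
        prob_space.indep_vars M (\<lambda>_. borel) (\<lambda>k \<omega>. W (tt (Suc k)) \<omega> - W (tt k) \<omega>) {..<n})"

definition has_long_run_variance :: "'a measure \<Rightarrow> (nat \<Rightarrow> 'a \<Rightarrow> real) \<Rightarrow> real \<Rightarrow> bool" where
  "has_long_run_variance M u S \<longleftrightarrow>
     (\<lambda>n. (\<integral>\<omega>. (\<Sum>i=1..n. u i \<omega>)\<^sup>2 \<partial>M) / real n) \<longlonglongrightarrow> S"

end

theory Submission
  imports Defs "HOL-Real_Asymp.Real_Asymp"
begin

lemma normal_density_le:
  assumes "\<sigma> > 0" shows "normal_density 0 \<sigma> y \<le> 1 / (2*\<sigma>)"
proof -
  have "sqrt (2 * pi * \<sigma>\<^sup>2) = sqrt (2*pi) * \<sigma>" using assms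
    by (simp add: real_sqrt_mult)
  moreover have "sqrt (2*pi) \<ge> 2"
    using pi_gt3 by (simp add: real_le_rsqrt)
  ultimately have s: "sqrt (2 * pi * \<sigma>\<^sup>2) \<ge> 2*\<sigma>" using assms by (simp add: mult_right_mono)
  have e: "exp (- (y - 0)\<^sup>2 / (2 * \<sigma>\<^sup>2)) \<le> 1" by simp
  have "normal_density 0 \<sigma> y = exp (- (y - 0)\<^sup>2 / (2 * \<sigma>\<^sup>2)) / sqrt (2 * pi * \<sigma>\<^sup>2)"
    by (simp add: normal_density_def)
  also have "\<dots> \<le> 1 / sqrt (2 * pi * \<sigma>\<^sup>2)"
    using e by (simp add: divide_right_mono)
  also have "\<dots> \<le> 1 / (2*\<sigma>)" using s assms by (simp add: frac_le)
  finally show ?thesis .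
qed

lemma (in prob_space) gauss_small:
  assumes D: "distributed M lborel X (\<lambda>y. ennreal (normal_density 0 \<sigma> y))" and s: "\<sigma> > 0" and r: "r \<ge> 0"
  shows "prob {\<omega>\<in>space M. \<bar>X \<omega>\<bar> \<le> r} \<le> r/\<sigma>"
proof -
  have eq: "{\<omega>\<in>space M. \<bar>X \<omega>\<bar> \<le> r} = X -` {-r..r} \<inter> space M" by auto
  have "emeasure M (X -` {-r..r} \<inter> space M) = (\<integral>\<^sup>+y. ennreal (normal_density 0 \<sigma> y) * indicator {-r..r} y \<partial>lborel)"
    by (rule distributed_emeasure[OF D]) simp
  also have "\<dots> \<le> (\<integral>\<^sup>+y. ennreal (1/(2*\<sigma>)) * indicator {-r..r} y \<partial>lborel)"
    by (intro nn_integral_mono) (auto intro!: mult_right_mono ennreal_leI normal_density_le s)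
  also have "\<dots> = ennreal (1/(2*\<sigma>)) * (2*r)"
    using r by (subst nn_integral_cmult_indicator) auto
  also have "\<dots> = ennreal (r/\<sigma>)"
    using s r by (simp add: ennreal_mult'[symmetric])
  finally have "emeasure M {\<omega>\<in>space M. \<bar>X \<omega>\<bar> \<le> r} \<le> ennreal (r/\<sigma>)" using eq by simp
  then show ?thesis using s r by (simp add: emeasure_eq_measure ennreal_le_iff)
qed

lemma (in prob_space) block_small:
  fixes D :: "nat \<Rightarrow> 'a \<Rightarrow> real" and h :: nat and \<theta> \<sigma> :: real
  assumes h: "h > 0" and meas: "\<And>i. i < h \<Longrightarrow> D i \<in> borel_measurable M"
    and s: "\<sigma> > 0" and th: "\<theta> > 0"
    and small: "\<And>i. i < h \<Longrightarrow> prob {\<omega>\<in>space M. \<bar>D i \<omega>\<bar> \<le> 2 * sqrt(\<theta>*h)} \<le> 2 * sqrt(\<theta>*h)/\<sigma>"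
  shows "prob {\<omega>\<in>space M. (\<Sum>i<h. (D i \<omega>)\<^sup>2) \<le> \<theta>*(real h)\<^sup>2} \<le> 4 * sqrt(\<theta>*h)/\<sigma>"
proof -
  define r where "r = 2 * sqrt(\<theta>*h)"
  have r0: "r > 0" using h th by (simp add: r_def)
  have r2: "r\<^sup>2 = 4*\<theta>*h" using h th by (simp add: r_def power_mult_distrib)
  define A where "A i = {\<omega>\<in>space M. \<bar>D i \<omega>\<bar> \<le> r}" for i
  have A_sets: "A i \<in> sets M" if "i < h" for i
    using meas[OF that] unfolding A_def by measurable
  define N where "N \<omega> = (\<Sum>i<h. indicator (A i) \<omega> :: real)" for \<omega>
  have intN: "integrable M N" unfolding N_def
    using A_sets by (intro Bochner_Integration.integrable_sum) (auto intro!: integrable_real_indicator simp: emeasure_eq_measure)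
  have EN: "(\<integral>\<omega>. N \<omega> \<partial>M) = (\<Sum>i<h. prob (A i))" unfolding N_def
    using A_sets by (subst Bochner_Integration.integral_sum) (auto intro!: integrable_real_indicator simp: emeasure_eq_measure)
  have EN_le: "(\<integral>\<omega>. N \<omega> \<partial>M) \<le> h * (r/\<sigma>)"
  proof -
    have "(\<Sum>i<h. prob (A i)) \<le> (\<Sum>i<h. r/\<sigma>)"
      using small by (intro sum_mono) (simp add: A_def r_def)
    then show ?thesis using EN by simp
  qed
  have sub: "{\<omega>\<in>space M. (\<Sum>i<h. (D i \<omega>)\<^sup>2) \<le> \<theta>*(real h)\<^sup>2} \<subseteq> {\<omega>\<in>space M. N \<omega> \<ge> h/2}"
  proof safe
    fix \<omega> assume \<omega>: "\<omega> \<in> space M" and S: "(\<Sum>i<h. (D i \<omega>)\<^sup>2) \<le> \<theta>*(real h)\<^sup>2"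
    define B where "B = {i\<in>{..<h}. \<bar>D i \<omega>\<bar> > r}"
    have finB: "finite B" by (simp add: B_def)
    have "real (card B) * r\<^sup>2 = (\<Sum>i\<in>B. r\<^sup>2)" by simp
    also have "\<dots> \<le> (\<Sum>i\<in>B. (D i \<omega>)\<^sup>2)"
    proof (rule sum_mono)
      fix i assume "i \<in> B"
      then have "r \<le> \<bar>D i \<omega>\<bar>" by (simp add: B_def)
      then have "r\<^sup>2 \<le> \<bar>D i \<omega>\<bar>\<^sup>2" using r0 by (intro power_mono) auto
      then show "r\<^sup>2 \<le> (D i \<omega>)\<^sup>2" by simp
    qed
    also have "\<dots> \<le> (\<Sum>i<h. (D i \<omega>)\<^sup>2)"
      by (rule sum_mono2) (auto simp: B_def)
    finally have "real (card B) * (4*\<theta>*h) \<le> \<theta>*(real h)\<^sup>2" using S r2 by simp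
    then have "real (card B) * 4 \<le> real h" using th h by (simp add: power2_eq_square)
    moreover have "N \<omega> = real (card ({..<h} - B))"
    proof -
      have "N \<omega> = (\<Sum>i\<in>{..<h} - B. 1) + (\<Sum>i\<in>B. 0)"
      proof -
        have "N \<omega> = (\<Sum>i\<in>({..<h} - B) \<union> B. indicator (A i) \<omega>)"
          unfolding N_def by (intro sum.cong) (auto simp: B_def)
        also have "\<dots> = (\<Sum>i\<in>{..<h} - B. indicator (A i) \<omega>) + (\<Sum>i\<in>B. indicator (A i) \<omega>)"
          by (rule sum.union_disjoint) (auto simp: finB)
        also have "\<dots> = (\<Sum>i\<in>{..<h} - B. 1) + (\<Sum>i\<in>B. 0)"
          using \<omega> by (intro arg_cong2[where f="(+)"] sum.cong) (auto simp: A_def B_def indicator_def)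
        finally show ?thesis .
      qed
      then show ?thesis by simp
    qed
    moreover have "card ({..<h} - B) = h - card B"
      by (subst card_Diff_subset) (auto simp: B_def finB)
    moreover have "card B \<le> h" using card_mono[of "{..<h}" B] by (auto simp: B_def)
    ultimately show "real h / 2 \<le> N \<omega>" by (simp add: of_nat_diff)
  qed
  have "prob {\<omega>\<in>space M. (\<Sum>i<h. (D i \<omega>)\<^sup>2) \<le> \<theta>*(real h)\<^sup>2} \<le> prob {\<omega>\<in>space M. N \<omega> \<ge> h/2}"
    using sub intN by (intro finite_measure_mono) auto
  also have "\<dots> \<le> (\<integral>\<omega>. N \<omega> \<partial>M) / (h/2)"
    using h by (intro integral_Markov_inequality_measure[where A="space M"] intN)
      (auto simp: N_def intro!: sum_nonneg)
  also have "\<dots> \<le> (h * (r/\<sigma>)) / (h/2)"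
    using EN_le h by (intro divide_right_mono) auto
  also have "\<dots> = 4 * sqrt(\<theta>*h)/\<sigma>" using h by (simp add: r_def)
  finally show ?thesis .
qed

lemma (in prob_space) many_events:
  fixes G :: "nat \<Rightarrow> 'a \<Rightarrow> real"
  assumes ind: "indep_vars (\<lambda>_. borel) G {..<n}"
    and pE: "\<And>j. j < n \<Longrightarrow> prob {\<omega>\<in>space M. G j \<omega> \<le> c} \<le> 1/15"
    and AS: "A \<subseteq> {\<omega>\<in>space M. real n \<le> 2 * real (card {j\<in>{..<n}. G j \<omega> \<le> c})}"
  shows "prob A \<le> (1/2)^n"
proof -
  define f where "f t = (if t \<le> c then 16 else 1::real)" for t
  have fm: "f \<in> borel_measurable borel" unfolding f_def by measurable
  define Y where "Y j \<omega> = f (G j \<omega>)" for j \<omega>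
  have indY: "indep_vars (\<lambda>_. borel) Y {..<n}"
    unfolding Y_def by (rule indep_vars_compose2[OF ind]) (rule fm)
  have Gm: "G j \<in> borel_measurable M" if "j < n" for j
    using ind that by (auto simp: indep_vars_def)
  have Ym: "Y j \<in> borel_measurable M" if "j < n" for j
    unfolding Y_def using Gm[OF that] fm by measurable
  have intY: "integrable M (Y j)" if "j < n" for j
    by (rule integrable_const_bound[where B=16]) (auto simp: Y_def f_def intro: Ym[OF that])
  have EY: "(\<integral>\<omega>. Y j \<omega> \<partial>M) \<le> 2" if "j < n" for j
  proof -
    define A where "A = {\<omega>\<in>space M. G j \<omega> \<le> c}"
    have A: "A \<in> events" unfolding A_def using Gm[OF that] by measurable
    have "(\<integral>\<omega>. Y j \<omega> \<partial>M) = (\<integral>\<omega>. 1 + 15 * indicator A \<omega> \<partial>M)"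
      by (intro Bochner_Integration.integral_cong) (auto simp: Y_def f_def A_def indicator_def)
    also have "\<dots> = 1 + 15 * prob A"
      using A by (simp add: emeasure_eq_measure prob_space)
    also have "\<dots> \<le> 2" using pE[OF that] by (simp add: A_def)
    finally show ?thesis .
  qed
  define P where "P \<omega> = (\<Prod>j<n. Y j \<omega>)" for \<omega>
  have intP: "integrable M P" unfolding P_def
    using indY intY by (intro indep_vars_integrable) auto
  have EP: "(\<integral>\<omega>. P \<omega> \<partial>M) \<le> 2^n"
  proof -
    have "(\<integral>\<omega>. P \<omega> \<partial>M) = (\<Prod>j<n. \<integral>\<omega>. Y j \<omega> \<partial>M)"
      unfolding P_def using indY intY by (intro indep_vars_lebesgue_integral) auto
    also have "\<dots> \<le> (\<Prod>j<n. 2)"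
    proof (rule prod_mono)
      fix j assume "j \<in> {..<n}"
      then have "0 \<le> (\<integral>\<omega>. Y j \<omega> \<partial>M)"
        by (intro integral_nonneg_AE) (auto simp: Y_def f_def)
      then show "0 \<le> (\<integral>\<omega>. Y j \<omega> \<partial>M) \<and> (\<integral>\<omega>. Y j \<omega> \<partial>M) \<le> 2"
        using EY \<open>j \<in> {..<n}\<close> by auto
    qed
    finally show ?thesis by simp
  qed
  have Pval: "P \<omega> = 16 ^ card {j\<in>{..<n}. G j \<omega> \<le> c}" for \<omega>
  proof -
    have "P \<omega> = (\<Prod>j<n. if G j \<omega> \<le> c then 16 else 1)"
      by (simp add: P_def Y_def f_def)
    also have "\<dots> = (\<Prod>j\<in>{..<n} \<inter> {j. G j \<omega> \<le> c}. 16) * (\<Prod>j\<in>{..<n} \<inter> - {j. G j \<omega> \<le> c}. 1)"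
      by (rule prod.If_cases) simp
    also have "\<dots> = 16 ^ card {j\<in>{..<n}. G j \<omega> \<le> c}"
      by (simp add: Int_def conj_commute)
    finally show ?thesis .
  qed
  have sub: "{\<omega>\<in>space M. real n \<le> 2 * real (card {j\<in>{..<n}. G j \<omega> \<le> c})} \<subseteq> {\<omega>\<in>space M. P \<omega> \<ge> 4^n}"
  proof safe
    fix \<omega> assume "real n \<le> 2 * real (card {j\<in>{..<n}. G j \<omega> \<le> c})"
    then have "n \<le> 2 * card {j\<in>{..<n}. G j \<omega> \<le> c}" by linarith
    then have "(4::real)^n \<le> 4^(2 * card {j\<in>{..<n}. G j \<omega> \<le> c})"
      by (intro power_increasing) auto
    also have "\<dots> = 16 ^ card {j\<in>{..<n}. G j \<omega> \<le> c}"
      by (simp add: power_mult)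
    finally show "4^n \<le> P \<omega>" by (simp add: Pval)
  qed
  have "prob A \<le> prob {\<omega>\<in>space M. P \<omega> \<ge> 4^n}"
    using sub AS intP by (intro finite_measure_mono) auto
  also have "\<dots> \<le> (\<integral>\<omega>. P \<omega> \<partial>M) / 4^n"
    by (intro integral_Markov_inequality_measure[where A="space M"] intP)
      (auto simp: Pval)
  also have "\<dots> \<le> 2^n / 4^n"
    using EP by (intro divide_right_mono) auto
  also have "\<dots> = (1/2)^n"
    by (simp add: power_divide[symmetric])
  finally show ?thesis .
qed

lemma sum_double: "(\<Sum>r<2*h. g r) = (\<Sum>r<h. g r) + (\<Sum>r<h. g (r+h::nat)) "
  by (subst sum_mult_product) (simp add: numeral_2_eq_2)

lemma pair_ineq: "((a::real) - b)\<^sup>2 / 2 \<le> b\<^sup>2 + a\<^sup>2"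
proof -
  have "(a-b)\<^sup>2 + (a+b)\<^sup>2 = 2*a\<^sup>2 + 2*b\<^sup>2" by (simp add: power2_eq_square algebra_simps)
  moreover have "(a+b)\<^sup>2 \<ge> 0" by simp
  ultimately show ?thesis by linarith
qed

lemma disj_blocks: "disjoint_family_on (\<lambda>j::nat. {j*L..<j*L+L}) (A::nat set)"
  unfolding disjoint_family_on_def
proof (intro ballI impI)
  fix j j' :: nat assume "j \<noteq> j'"
  have *: "{j*L..<j*L+L} \<inter> {j'*L..<j'*L+L} = {}" if "j < j'" for j j' :: nat
  proof -
    have "Suc j * L \<le> j' * L" using that by (intro mult_le_mono1) simp
    then show ?thesis by auto
  qed
  show "{j*L..<j*L+L} \<inter> {j'*L..<j'*L+L} = {}"
    using \<open>j \<noteq> j'\<close> *[of j j'] *[of j' j] by (cases "j < j'") (auto simp: Int_commute)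
qed

lemma (in prob_space) wiener_block_bound:
  assumes wp: "wiener_process M Su W" and Su: "Su > 0" and n: "n > 0" and h: "h > 0"
  shows "prob {\<omega>\<in>space M. (\<Sum>q<n*(2*h). (W (real (Suc q)) \<omega>)\<^sup>2) \<le> Su/3600 * real n * (real h)\<^sup>2 / 4} \<le> (1/2)^n"
proof -
  define L where "L = 2*h"
  define \<theta> where "\<theta> = Su/3600"
  have th: "\<theta> > 0" using Su by (simp add: \<theta>_def)
  have Wm: "\<And>t. t \<ge> 0 \<Longrightarrow> W t \<in> borel_measurable M"
    and Wd: "\<And>s t. 0 \<le> s \<Longrightarrow> s < t \<Longrightarrow> distributed M lborel (\<lambda>\<omega>. W t \<omega> - W s \<omega>)
          (\<lambda>y. ennreal (normal_density 0 (sqrt (Su * (t - s))) y))"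
    and Wi: "\<And>(n::nat) (tt::nat \<Rightarrow> real). 0 \<le> tt 0 \<Longrightarrow> (\<forall>k<n. tt k < tt (Suc k)) \<Longrightarrow>
        indep_vars (\<lambda>_. borel) (\<lambda>k \<omega>. W (tt (Suc k)) \<omega> - W (tt k) \<omega>) {..<n}"
    using wp unfolding wiener_process_def by auto
  define G where "G j \<omega> = (\<Sum>i<h. (W (real (Suc (j*L+i+h))) \<omega> - W (real (Suc (j*L+i))) \<omega>)\<^sup>2)" for j \<omega>
  have pG: "prob {\<omega>\<in>space M. G j \<omega> \<le> \<theta> * (real h)\<^sup>2} \<le> 1/15" for j
  proof -
    define \<sigma> where "\<sigma> = sqrt (Su * real h)"
    have s: "\<sigma> > 0" using Su h by (simp add: \<sigma>_def)
    have sq: "sqrt (\<theta> * real h) = \<sigma> / 60"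
    proof -
      have "\<theta> * real h = (Su * real h) / 60\<^sup>2" by (simp add: \<theta>_def)
      then have "sqrt (\<theta> * real h) = sqrt (Su * real h) / sqrt (60\<^sup>2)"
        by (simp only: real_sqrt_divide)
      then show ?thesis by (simp add: \<sigma>_def)
    qed
    have "prob {\<omega>\<in>space M. (\<Sum>i<h. (W (real (Suc (j*L+i+h))) \<omega> - W (real (Suc (j*L+i))) \<omega>)\<^sup>2) \<le> \<theta> * (real h)\<^sup>2}
       \<le> 4 * sqrt (\<theta> * h) / \<sigma>"
    proof (rule block_small[OF h _ s th])
      fix i assume "i < h"
      show "(\<lambda>\<omega>. W (real (Suc (j*L+i+h))) \<omega> - W (real (Suc (j*L+i))) \<omega>) \<in> borel_measurable M"
        using Wm by (intro borel_measurable_diff) auto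
      have D: "distributed M lborel (\<lambda>\<omega>. W (real (Suc (j*L+i+h))) \<omega> - W (real (Suc (j*L+i))) \<omega>)
          (\<lambda>y. ennreal (normal_density 0 \<sigma> y))"
      proof -
        have "real (Suc (j*L+i+h)) - real (Suc (j*L+i)) = real h" by simp
        then show ?thesis using Wd[of "real (Suc (j*L+i))" "real (Suc (j*L+i+h))"] h
          by (simp add: \<sigma>_def)
      qed
      show "prob {\<omega>\<in>space M. \<bar>W (real (Suc (j*L+i+h))) \<omega> - W (real (Suc (j*L+i))) \<omega>\<bar> \<le> 2 * sqrt (\<theta> * h)}
          \<le> 2 * sqrt (\<theta> * h) / \<sigma>"
        by (rule gauss_small[OF D s]) (use th in simp)
    qed
    also have "\<dots> = 1/15" using s by (simp add: sq)
    finally show ?thesis by (simp add: G_def)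
  qed
  define X where "X k \<omega> = W (real (Suc (Suc k))) \<omega> - W (real (Suc k)) \<omega>" for k \<omega>
  have indX: "indep_vars (\<lambda>_. borel) X {..<n*L}"
    using Wi[of "\<lambda>k. real (Suc k)" "n*L"] unfolding X_def by simp
  define K where "K j = {j*L..<j*L+L}" for j
  have indR: "indep_vars (\<lambda>j. PiM (K j) (\<lambda>_. borel)) (\<lambda>j \<omega>. restrict (\<lambda>k. X k \<omega>) (K j)) {..<n}"
  proof (rule indep_vars_restrict[OF indX])
    fix j assume "j \<in> {..<n}"
    then have "Suc j * L \<le> n * L" by (intro mult_le_mono1) simp
    then show "K j \<subseteq> {..<n*L}" by (auto simp: K_def)
  next
    show "disjoint_family_on K {..<n}" unfolding K_def by (rule disj_blocks)
  qed
  define \<phi> where "\<phi> j y = (\<Sum>i<h. (\<Sum>k\<in>{j*L+i..<j*L+i+h}. y k)\<^sup>2)" for j and y :: "nat \<Rightarrow> real"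
  have sub_K: "{j*L+i..<j*L+i+h} \<subseteq> K j" if "i < h" for i j
    using that by (auto simp: K_def L_def)
  have \<phi>m: "\<phi> j \<in> borel_measurable (PiM (K j) (\<lambda>_. borel))" for j
  proof -
    have c: "(\<lambda>y. y k) \<in> borel_measurable (PiM (K j) (\<lambda>_. borel))" if "k \<in> K j" for k
      by (rule measurable_component_singleton[OF that])
    show ?thesis unfolding \<phi>_def
      apply (intro borel_measurable_sum borel_measurable_power)
      using c sub_K by blast
  qed
  have indG: "indep_vars (\<lambda>_. borel) G {..<n}"
  proof -
    have "indep_vars (\<lambda>_. borel) (\<lambda>j \<omega>. \<phi> j (restrict (\<lambda>k. X k \<omega>) (K j))) {..<n}"
      by (rule indep_vars_compose2[OF indR \<phi>m])
    moreover have "(\<lambda>j \<omega>. \<phi> j (restrict (\<lambda>k. X k \<omega>) (K j))) = G"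
    proof (intro ext)
      fix j \<omega>
      have "\<phi> j (restrict (\<lambda>k. X k \<omega>) (K j)) = (\<Sum>i<h. (\<Sum>k\<in>{j*L+i..<j*L+i+h}. X k \<omega>)\<^sup>2)"
        unfolding \<phi>_def
      proof (intro sum.cong refl arg_cong[where f="\<lambda>x. x\<^sup>2"])
        fix i k assume "i \<in> {..<h}" "k \<in> {j*L+i..<j*L+i+h}"
        then have "k \<in> K j" using sub_K[of i j] by auto
        then show "restrict (\<lambda>k. X k \<omega>) (K j) k = X k \<omega>" by simp
      qed
      also have "\<dots> = G j \<omega>" unfolding G_def X_def
        by (intro sum.cong refl arg_cong[where f="\<lambda>x. x\<^sup>2"])
          (subst sum_Suc_diff'[where f="\<lambda>k. W (real (Suc k)) \<omega>"], simp_all)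
      finally show "\<phi> j (restrict (\<lambda>k. X k \<omega>) (K j)) = G j \<omega>" .
    qed
    ultimately show ?thesis by simp
  qed
  have det: "real n \<le> 2 * real (card {j\<in>{..<n}. G j \<omega> \<le> \<theta> * (real h)\<^sup>2})"
    if S: "(\<Sum>q<n*(2*h). (W (real (Suc q)) \<omega>)\<^sup>2) \<le> \<theta> * real n * (real h)\<^sup>2 / 4" for \<omega>
  proof (rule ccontr)
    assume C: "\<not> ?thesis"
    define f where "f q = (W (real (Suc q)) \<omega>)\<^sup>2" for q
    have SS: "(\<Sum>q<n*(2*h). f q) = (\<Sum>j<n. \<Sum>r<2*h. f (r + j*(2*h)))"
      by (rule sum_mult_product)
    have SS2: "(\<Sum>j<n. \<Sum>r<2*h. f (r + j*(2*h))) = (\<Sum>j<n. (\<Sum>r<h. f (r + j*(2*h)) + f (r + h + j*(2*h))))"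
    proof (rule sum.cong[OF refl])
      fix j
      show "(\<Sum>r<2*h. f (r + j*(2*h))) = (\<Sum>r<h. f (r + j*(2*h)) + f (r + h + j*(2*h)))"
        using sum_double[of "\<lambda>r. f (r + j*(2*h))" h] by (simp add: sum.distrib)
    qed
    have SS3: "(\<Sum>j<n. G j \<omega> / 2) \<le> (\<Sum>j<n. (\<Sum>r<h. f (r + j*(2*h)) + f (r + h + j*(2*h))))"
    proof (rule sum_mono)
      fix j
      have "G j \<omega> / 2 = (\<Sum>r<h. (W (real (Suc (j*L+r+h))) \<omega> - W (real (Suc (j*L+r))) \<omega>)\<^sup>2 / 2)"
        by (simp add: G_def sum_divide_distrib)
      also have "\<dots> \<le> (\<Sum>r<h. f (r + j*(2*h)) + f (r + h + j*(2*h)))"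
      proof (rule sum_mono)
        fix r
        have e1: "r + j*(2*h) = j*L+r" and e2: "r + h + j*(2*h) = j*L+r+h" by (simp_all add: L_def)
        show "(W (real (Suc (j*L+r+h))) \<omega> - W (real (Suc (j*L+r))) \<omega>)\<^sup>2 / 2 \<le> f (r + j*(2*h)) + f (r + h + j*(2*h))"
          unfolding e1 e2 f_def
          by (rule pair_ineq)
      qed
      finally show "G j \<omega> / 2 \<le> (\<Sum>r<h. f (r + j*(2*h)) + f (r + h + j*(2*h)))" .
    qed
    have S2: "(\<Sum>j<n. G j \<omega> / 2) \<le> \<theta> * real n * (real h)\<^sup>2 / 4"
      using S SS SS2 SS3 unfolding f_def by linarith
    define Gd where "Gd = {j\<in>{..<n}. G j \<omega> \<le> \<theta> * (real h)\<^sup>2}"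
    define Bd where "Bd = {j\<in>{..<n}. \<not> G j \<omega> \<le> \<theta> * (real h)\<^sup>2}"
    have cn: "card Gd + card Bd = n"
    proof -
      have "card (Gd \<union> Bd) = card Gd + card Bd"
        by (rule card_Un_disjoint) (auto simp: Gd_def Bd_def)
      moreover have "Gd \<union> Bd = {..<n}" by (auto simp: Gd_def Bd_def)
      ultimately show ?thesis by simp
    qed
    have Gn: "G j \<omega> \<ge> 0" for j unfolding G_def by (intro sum_nonneg) auto
    have "real (card Bd) * (\<theta> * (real h)\<^sup>2) = (\<Sum>j\<in>Bd. \<theta> * (real h)\<^sup>2)" by simp
    also have "\<dots> \<le> (\<Sum>j\<in>Bd. G j \<omega>)"
      by (intro sum_mono) (auto simp: Bd_def)
    also have "\<dots> \<le> (\<Sum>j<n. G j \<omega>)"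
      by (intro sum_mono2) (auto simp: Bd_def Gn)
    finally have B1: "real (card Bd) * (\<theta> * (real h)\<^sup>2) \<le> (\<Sum>j<n. G j \<omega>)" .
    have "(\<Sum>j<n. G j \<omega>) \<le> \<theta> * real n * (real h)\<^sup>2 / 2"
      using S2 by (simp add: sum_divide_distrib[symmetric])
    with B1 have "real (card Bd) * (\<theta> * (real h)\<^sup>2) \<le> (real n / 2) * (\<theta> * (real h)\<^sup>2)"
      by (simp add: algebra_simps)
    then have "real (card Bd) \<le> real n / 2" using th h by simp
    moreover have "2 * real (card Gd) < real n" using C by (simp add: Gd_def)
    ultimately show False using cn by linarith
  qed
  have "prob {\<omega>\<in>space M. (\<Sum>q<n*(2*h). (W (real (Suc q)) \<omega>)\<^sup>2) \<le> \<theta> * real n * (real h)\<^sup>2 / 4} \<le> (1/2)^n"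
    by (rule many_events[OF indG pG]) (use det in blast)
  then show ?thesis by (simp add: \<theta>_def)
qed

lemma pow_bound:
  assumes k: "k \<ge> 1" and n: "3 * ln (real k) \<le> real n"
  shows "(1/2::real)^n \<le> inverse (real k ^ 2)"
proof -
  have k0: "real k > 0" using k by simp
  have lk: "ln (real k) \<ge> 0" using k by simp
  have l2: "ln (real k ^ 2) = 2 * ln (real k)" using k0 by (simp add: ln_realpow)
  have e2: "real k ^ 2 = exp (2 * ln (real k))"
    unfolding l2[symmetric] using k0 by (subst exp_ln) auto
  have "2 * ln (real k) = (3 * ln (real k)) * (2/3)" by simp
  also have "\<dots> \<le> real n * ln 2"
    using n lk ln2_ge_two_thirds by (intro mult_mono) auto
  finally have "exp (2 * ln (real k)) \<le> exp (real n * ln 2)" by simp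
  also have "\<dots> = 2 ^ n" by (simp add: exp_of_nat_mult)
  finally have "real k ^ 2 \<le> 2 ^ n" using e2 by simp
  then have "inverse ((2::real)^n) \<le> inverse (real k ^ 2)" using k0 by (intro le_imp_inverse_le) auto
  then show ?thesis by (simp add: power_one_over inverse_eq_divide)
qed

lemma (in prob_space) W_lower:
  assumes wp: "wiener_process M Su W" and Su: "Su > 0"
  shows "AE \<omega> in M. eventually (\<lambda>m. Su/3686400 * (real m)\<^sup>2 / ln (ln (real m)) \<le> (\<Sum>i=1..m. (W (real i) \<omega>)\<^sup>2)) sequentially"
proof -
  have Wm: "\<And>t. t \<ge> 0 \<Longrightarrow> W t \<in> borel_measurable M"
    using wp unfolding wiener_process_def by auto
  define nk where "nk k = nat \<lceil>3 * ln (real k)\<rceil>" for k :: nat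
  define hk where "hk k = 2^k div (2 * nk k)" for k :: nat
  have ev1: "eventually (\<lambda>k::nat. 4 * (3 * ln (real k) + 1) \<le> 2 powr (real k)) sequentially" by real_asymp
  have ev2: "eventually (\<lambda>k::nat. 3 * ln (real k) + 1 \<le> 4 * ln (real k * ln 2)) sequentially" by real_asymp
  have ev3: "eventually (\<lambda>k::nat. k \<ge> 3) sequentially" by (rule eventually_ge_at_top)
  obtain k1 where k1: "\<And>k. k \<ge> k1 \<Longrightarrow> 4 * (3 * ln (real k) + 1) \<le> 2 powr (real k) \<and>
      3 * ln (real k) + 1 \<le> 4 * ln (real k * ln 2) \<and> k \<ge> 3"
    using eventually_conj[OF ev1 eventually_conj[OF ev2 ev3]] unfolding eventually_sequentially by blast
  have lnk0: "ln (real k) \<ge> 0" for k by (cases k) auto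
  have nk_lo: "3 * ln (real k) \<le> real (nk k)" for k
    unfolding nk_def using lnk0[of k] by linarith
  have nk_hi: "real (nk k) \<le> 3 * ln (real k) + 1" for k
    unfolding nk_def using lnk0[of k] by linarith
  have big: "real (nk k) > 0 \<and> 4 * real (nk k) \<le> real ((2::nat)^k) \<and>
      real (hk k) \<ge> real ((2::nat)^k) / (4 * real (nk k)) \<and> hk k > 0 \<and>
      real (nk k) \<le> 4 * ln (ln (real ((2::nat)^k))) \<and> real ((2::nat)^k) > 1" if "k \<ge> k1" for k
  proof -
    have kk1: "4 * (3 * ln (real k) + 1) \<le> 2 powr (real k)" and kk2: "3 * ln (real k) + 1 \<le> 4 * ln (real k * ln 2)"
      and kk3: "k \<ge> 3" using k1[OF that] by auto
    have k3: "real k \<ge> 3" using kk3 by simp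
    have "ln (real k) \<ge> ln 3" using k3 by simp
    moreover have "ln (3::real) > 1" by (rule ln3_gt_1)
    ultimately have lk: "ln (real k) > 1" by linarith
    have np: "real (nk k) > 0" using nk_lo[of k] lk by linarith
    have P: "real ((2::nat)^k) = 2 powr (real k)" by (simp add: powr_realpow)
    have "4 * real (nk k) \<le> 4 * (3 * ln (real k) + 1)" using nk_hi[of k] by simp
    then have "4 * real (nk k) \<le> 2 powr real k" using kk1 by (rule order.trans)
    then have n4: "4 * real (nk k) \<le> real ((2::nat)^k)" by (simp only: P)
    define nn where "nn = real (nk k)"
    define PP where "PP = real ((2::nat)^k)"
    have dm: "2^k = (2 * nk k) * hk k + 2^k mod (2 * nk k)" unfolding hk_def by simp
    have "2^k mod (2 * nk k) < 2 * nk k" using np by (intro mod_less_divisor) simp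
    then have ml: "real (2^k mod (2 * nk k)) < real (2 * nk k)" by (simp only: of_nat_less_iff)
    have "PP = real ((2 * nk k) * hk k + 2^k mod (2 * nk k))"
      unfolding PP_def by (rule arg_cong[OF dm])
    also have "\<dots> = 2 * nn * real (hk k) + real (2^k mod (2 * nk k))"
      unfolding nn_def by simp
    finally have "PP < 2 * nn * real (hk k) + 2 * nn" using ml unfolding nn_def by simp
    then have h1: "PP / (2*nn) - 1 < real (hk k)" using np unfolding nn_def
      by (simp add: field_simps)
    have "PP / (4*nn) \<ge> 1" using n4 np unfolding PP_def nn_def by simp
    then have "PP / (4*nn) \<le> PP / (2*nn) - 1" using np unfolding nn_def by (simp add: field_simps)
    with h1 have hlo: "real (hk k) \<ge> PP / (4 * nn)" by linarith
    have hp: "hk k > 0" using hlo \<open>PP / (4*nn) \<ge> 1\<close> by (cases "hk k") auto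
    have "ln (real ((2::nat)^k)) = real k * ln 2" by (simp add: ln_realpow)
    then have "real (nk k) \<le> 4 * ln (ln (real ((2::nat)^k)))" using kk2 nk_hi[of k] by (simp add: mult.commute)
    moreover have "real ((2::nat)^k) > 1"
    proof -
      have "nk k \<ge> 1" using np by simp
      then have "(1::real) < 4 * real (nk k)" by simp
      then show ?thesis using n4 by (rule less_le_trans)
    qed
    ultimately show ?thesis using np n4 hlo hp unfolding PP_def nn_def by simp
  qed
  define A where "A k = (if k \<ge> k1 then {\<omega>\<in>space M. (\<Sum>q<nk k*(2*hk k). (W (real (Suc q)) \<omega>)\<^sup>2) \<le> Su/3600 * real (nk k) * (real (hk k))\<^sup>2 / 4} else {})" for k
  have A_sets: "A k \<in> events" for k
  proof -
    have "(\<lambda>\<omega>. (\<Sum>q<nk k*(2*hk k). (W (real (Suc q)) \<omega>)\<^sup>2)) \<in> borel_measurable M"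
      using Wm by (intro borel_measurable_sum borel_measurable_power) auto
    then show ?thesis unfolding A_def by (auto simp: pred_def)
  qed
  have pA: "prob (A k) \<le> inverse (real k ^ 2)" if "k \<ge> k1" for k
  proof -
    note b = big[OF that]
    have "prob {\<omega>\<in>space M. (\<Sum>q<nk k*(2*hk k). (W (real (Suc q)) \<omega>)\<^sup>2) \<le> Su/3600 * real (nk k) * (real (hk k))\<^sup>2 / 4} \<le> (1/2)^(nk k)"
      by (rule wiener_block_bound[OF wp Su]) (use b in auto)
    then have "prob (A k) \<le> (1/2)^(nk k)"
      unfolding A_def using that by simp
    also have "\<dots> \<le> inverse (real k ^ 2)"
    proof (rule pow_bound)
      show "k \<ge> 1" using k1[OF that] by linarith
    qed (rule nk_lo)
    finally show ?thesis .
  qed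
  have summ: "summable (\<lambda>k. measure M (A k))"
  proof (rule summable_comparison_test'[where N=k1])
    show "summable (\<lambda>k. inverse (real k ^ 2))" by (rule inverse_power_summable) simp
    show "norm (measure M (A k)) \<le> inverse (real k ^ 2)" if "k \<ge> k1" for k
      using pA[OF that] by simp
  qed
  have BC: "AE \<omega> in M. eventually (\<lambda>k. \<omega> \<in> space M - A k) sequentially"
    by (rule borel_cantelli_AE1[OF A_sets _ summ]) (simp add: emeasure_eq_measure)
  show ?thesis
  proof (rule eventually_mono[OF BC])
    fix \<omega> assume "eventually (\<lambda>k. \<omega> \<in> space M - A k) sequentially"
    then obtain K0 where K0: "\<And>k. k \<ge> K0 \<Longrightarrow> \<omega> \<in> space M - A k" unfolding eventually_sequentially by blast
    show "eventually (\<lambda>m. Su/3686400 * (real m)\<^sup>2 / ln (ln (real m)) \<le> (\<Sum>i=1..m. (W (real i) \<omega>)\<^sup>2)) sequentially"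
      unfolding eventually_sequentially
    proof (intro exI allI impI)
      fix m :: nat assume m: "2 ^ max K0 k1 \<le> m"
      have "(1::nat) \<le> 2 ^ max K0 k1" by simp
      then have "1 \<le> m" using m by (rule le_trans)
      then obtain k where k: "2^k \<le> m" "m < 2^(k+1)" using ex_power_ivl1[of 2 m] by auto
      have "(2::nat) ^ max K0 k1 < 2 ^ (k+1)" using m k(2) by (rule le_less_trans)
      then have "max K0 k1 < k + 1" by (rule power_less_imp_less_exp[rotated]) simp
      then have kK: "k \<ge> K0" "k \<ge> k1" by auto
      note b = big[OF kK(2)]
      define nn where "nn = real (nk k)"
      define hh where "hh = real (hk k)"
      define PP where "PP = real ((2::nat)^k)"
      define S where "S = (\<Sum>q<nk k*(2*hk k). (W (real (Suc q)) \<omega>)\<^sup>2)"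
      define lnl where "lnl = ln (ln (real m))"
      have \<omega>: "\<omega> \<in> space M" "\<omega> \<notin> A k" using K0[OF kK(1)] by auto
      have S1: "S > Su/3600 * nn * hh\<^sup>2 / 4" using \<omega> kK(2)
        unfolding A_def S_def nn_def hh_def by auto
      have np: "nn > 0" using b nn_def by simp
      have PP1: "PP > 1" using b PP_def by simp
      have PPm: "PP \<le> real m" using k(1) unfolding PP_def by (simp only: of_nat_le_iff)
      have "m < 2 * 2^k" using k(2) by simp
      then have "real m < real (2 * 2^k)" by (simp only: of_nat_less_iff)
      then have mPP: "real m < 2 * PP" unfolding PP_def by simp
      have "ln (ln PP) \<le> lnl"
        unfolding lnl_def using PP1 PPm by (intro ln_mono) auto
      then have nl: "nn \<le> 4 * lnl" using b unfolding nn_def PP_def by linarith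
      have hl: "hh \<ge> PP / (4 * nn)" using b unfolding hh_def PP_def nn_def by simp
      have sum_ge: "S \<le> (\<Sum>i=1..m. (W (real i) \<omega>)\<^sup>2)"
      proof -
        have "nk k * (2 * hk k) \<le> 2^k"
        proof -
          have "(2 * nk k) * (2^k div (2 * nk k)) \<le> 2^k" by simp
          then show ?thesis by (simp add: hk_def mult.assoc mult.left_commute)
        qed
        then have "nk k * (2 * hk k) \<le> m" using k(1) by linarith
        then have "S \<le> (\<Sum>q<m. (W (real (Suc q)) \<omega>)\<^sup>2)" unfolding S_def
          by (intro sum_mono2) auto
        also have "\<dots> = (\<Sum>i=1..m. (W (real i) \<omega>)\<^sup>2)"
          by (simp add: sum.atLeast1_atMost_eq)
        finally show ?thesis .
      qed
      have "nn * hh\<^sup>2 \<ge> nn * (PP / (4*nn))\<^sup>2"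
        using hl np PP1 by (intro mult_left_mono power_mono) auto
      moreover have "nn * (PP / (4*nn))\<^sup>2 = PP\<^sup>2 / (16 * nn)"
        using np by (simp add: field_simps power2_eq_square)
      moreover have "PP\<^sup>2 / (16 * nn) \<ge> (real m)\<^sup>2 / (64 * nn)"
      proof -
        have "(real m)\<^sup>2 \<le> (2*PP)\<^sup>2" using mPP by (intro power_mono) auto
        then show ?thesis using np by (simp add: field_simps power2_eq_square)
      qed
      moreover have "(real m)\<^sup>2 / (64 * nn) \<ge> (real m)\<^sup>2 / (256 * lnl)"
        using np nl by (intro divide_left_mono) auto
      ultimately have "nn * hh\<^sup>2 \<ge> (real m)\<^sup>2 / (256 * lnl)" by linarith
      then have "Su/14400 * ((real m)\<^sup>2 / (256 * lnl)) \<le> Su/14400 * (nn * hh\<^sup>2)"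
        by (rule mult_left_mono) (use Su in simp)
      moreover have "Su/3600 * nn * hh\<^sup>2 / 4 = Su/14400 * (nn * hh\<^sup>2)" by simp
      moreover have "Su/14400 * ((real m)\<^sup>2 / (256 * lnl)) = Su/3686400 * (real m)\<^sup>2 / lnl"
        by simp
      ultimately show "Su/3686400 * (real m)\<^sup>2 / ln (ln (real m)) \<le> (\<Sum>i=1..m. (W (real i) \<omega>)\<^sup>2)"
        using S1 sum_ge unfolding lnl_def by linarith
    qed
  qed
qed

lemma asy_aux:
  fixes d B c :: real assumes "d > 0" "B > 0" "c > 0"
  shows "eventually (\<lambda>m::nat. B * real m powr (2 - 2*d) \<le> c * (real m)\<^sup>2 / ln (ln (real m))) sequentially"
  using assms by real_asymp

lemma asy_aux2: "eventually (\<lambda>m::nat. 0 < ln (ln (real m))) sequentially"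
  by real_asymp

lemma final_pointwise:
  fixes x W :: "nat \<Rightarrow> real" and m :: nat and C \<delta> c1 :: real
  assumes m1: "m \<ge> 1" and lp: "ln (ln (real m)) > 0"
    and Cm: "(MAX i\<in>{1..m}. \<bar>x i - W i\<bar>) \<le> C * real m powr (1/2 - \<delta>)"
    and Bm: "c1 * (real m)\<^sup>2 / ln (ln (real m)) \<le> (\<Sum>i=1..m. (W i)\<^sup>2)"
    and Dm: "(C\<^sup>2 + 1) * real m powr (2 - 2*\<delta>) \<le> c1/4 * (real m)\<^sup>2 / ln (ln (real m))"
  shows "c1/4 * (real m)\<^sup>2 / ln (ln (real m)) \<le> (\<Sum>i=1..m. (x i)\<^sup>2)"
proof -
  define a where "a = C * real m powr (1/2 - \<delta>)"
  define Q where "Q = c1 * (real m)\<^sup>2 / ln (ln (real m))"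
  have m0: "real m > 0" using m1 by simp
  have dev: "(x i - W i)\<^sup>2 \<le> a\<^sup>2" if "i \<in> {1..m}" for i
  proof -
    have "\<bar>x i - W i\<bar> \<le> (MAX i\<in>{1..m}. \<bar>x i - W i\<bar>)"
      using that by (intro Max_ge) auto
    then have "\<bar>x i - W i\<bar> \<le> a" using Cm by (simp add: a_def)
    then have "\<bar>x i - W i\<bar>\<^sup>2 \<le> a\<^sup>2" by (intro power_mono) auto
    then show ?thesis by simp
  qed
  have a2: "real m * a\<^sup>2 = C\<^sup>2 * real m powr (2 - 2*\<delta>)"
  proof -
    define p where "p = real m powr (1/2 - \<delta>)"
    have e: "2 - 2*\<delta> = 1 + (1/2-\<delta>) + (1/2-\<delta>)" by simp
    have "real m powr (2 - 2*\<delta>) = real m powr 1 * p * p"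
      unfolding e p_def by (simp only: powr_add)
    then have E: "real m powr (2 - 2*\<delta>) = real m * (p * p)" using m0 by simp
    have "real m * a\<^sup>2 = C\<^sup>2 * (real m * (p * p))"
      by (simp add: a_def p_def power2_eq_square ac_simps)
    then show ?thesis using E by simp
  qed
  have sdev: "(\<Sum>i=1..m. (x i - W i)\<^sup>2) \<le> c1/4 * (real m)\<^sup>2 / ln (ln (real m))"
  proof -
    have "(\<Sum>i=1..m. (x i - W i)\<^sup>2) \<le> (\<Sum>i=1..m. a\<^sup>2)"
      by (rule sum_mono) (rule dev)
    also have "\<dots> = real m * a\<^sup>2" by simp
    also have "\<dots> \<le> (C\<^sup>2 + 1) * real m powr (2 - 2*\<delta>)"
      unfolding a2 by (intro mult_right_mono) auto
    finally show ?thesis using Dm by linarith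
  qed
  have "(\<Sum>i=1..m. (W i)\<^sup>2 / 2 - (x i - W i)\<^sup>2) \<le> (\<Sum>i=1..m. (x i)\<^sup>2)"
  proof (rule sum_mono)
    fix i
    have "(x i - (x i - W i))\<^sup>2 / 2 \<le> (x i - W i)\<^sup>2 + (x i)\<^sup>2" by (rule pair_ineq)
    then show "(W i)\<^sup>2 / 2 - (x i - W i)\<^sup>2 \<le> (x i)\<^sup>2" by simp
  qed
  moreover have "(\<Sum>i=1..m. (W i)\<^sup>2 / 2 - (x i - W i)\<^sup>2) = (\<Sum>i=1..m. (W i)\<^sup>2) / 2 - (\<Sum>i=1..m. (x i - W i)\<^sup>2)"
    by (simp add: sum_subtractf sum_divide_distrib)
  moreover have "c1/4 * (real m)\<^sup>2 / ln (ln (real m)) = Q/4" by (simp add: Q_def)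
  ultimately show ?thesis using Bm sdev unfolding Q_def by linarith
qed

theorem lemmaA2:
  fixes M :: "'a measure"
    and x u :: "nat \<Rightarrow> 'a \<Rightarrow> real"
    and Su \<delta>' :: real
  assumes "prob_space M"
    and rv_u: "\<And>i. u i \<in> borel_measurable M"
    and rv_x0: "x 0 \<in> borel_measurable M"
    and rec: "\<And>i \<omega>. i \<ge> 1 \<Longrightarrow> x i \<omega> = x (i - 1) \<omega> + u i \<omega>"
    and int_u: "\<And>i. i \<ge> 1 \<Longrightarrow> integrable M (u i)"
    and mean0: "\<And>i. i \<ge> 1 \<Longrightarrow> (\<integral>\<omega>. u i \<omega> \<partial>M) = 0"
    and sq_int_u: "\<And>i. i \<ge> 1 \<Longrightarrow> integrable M (\<lambda>\<omega>. (u i \<omega>)\<^sup>2)"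
    and lrv: "has_long_run_variance M u Su" and Su_pos: "Su > 0"
    and x0_sq: "integrable M (\<lambda>\<omega>. (x 0 \<omega>)\<^sup>2)"
    and delta: "0 < \<delta>'" "\<delta>' < 1/2"
    and strong_approx: "\<exists>W. wiener_process M Su W \<and>
       (AE \<omega> in M. \<exists>C. \<forall>\<^sub>F t in sequentially.
          (MAX i\<in>{1..t}. \<bar>x i \<omega> - W (real i) \<omega>\<bar>) \<le> C * real t powr (1/2 - \<delta>'))"
  shows "\<exists>c0 m0. 0 < c0 \<and> m0 \<in> measurable M (count_space UNIV) \<and>
           (AE \<omega> in M. \<forall>m\<ge>m0 \<omega>.
              (\<Sum>i=1..m. (x i \<omega>)\<^sup>2) \<ge> c0 * (real m)\<^sup>2 / ln (ln (real m)))"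
proof -
  interpret prob_space M by fact
  obtain W where wp: "wiener_process M Su W"
    and sa: "AE \<omega> in M. \<exists>C. \<forall>\<^sub>F t in sequentially.
          (MAX i\<in>{1..t}. \<bar>x i \<omega> - W (real i) \<omega>\<bar>) \<le> C * real t powr (1/2 - \<delta>')"
    using strong_approx by blast
  note WL = W_lower[OF wp Su_pos]
  define c1 where "c1 = Su/3686400"
  have c1p: "c1 > 0" using Su_pos by (simp add: c1_def)
  define c0 where "c0 = c1/4"
  have c0p: "c0 > 0" using c1p by (simp add: c0_def)
  define P where "P m \<omega> \<longleftrightarrow> c0 * (real m)\<^sup>2 / ln (ln (real m)) \<le> (\<Sum>i=1..m. (x i \<omega>)\<^sup>2)" for m \<omega>
  have good: "AE \<omega> in M. \<exists>N. \<forall>m\<ge>N. P m \<omega>"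
    using sa WL
  proof eventually_elim
    fix \<omega>
    assume A: "\<exists>C. \<forall>\<^sub>F t in sequentially. (MAX i\<in>{1..t}. \<bar>x i \<omega> - W (real i) \<omega>\<bar>) \<le> C * real t powr (1/2 - \<delta>')"
      and B: "\<forall>\<^sub>F m in sequentially. Su/3686400 * (real m)\<^sup>2 / ln (ln (real m)) \<le> (\<Sum>i=1..m. (W (real i) \<omega>)\<^sup>2)"
    obtain C where C: "\<forall>\<^sub>F t in sequentially. (MAX i\<in>{1..t}. \<bar>x i \<omega> - W (real i) \<omega>\<bar>) \<le> C * real t powr (1/2 - \<delta>')"
      using A by blast
    have D: "eventually (\<lambda>m::nat. (C\<^sup>2 + 1) * real m powr (2 - 2*\<delta>') \<le> c1/4 * (real m)\<^sup>2 / ln (ln (real m))) sequentially"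
    proof (rule asy_aux)
      show "0 < C\<^sup>2 + 1" by (simp add: add_nonneg_pos)
    qed (use delta c1p in auto)
    have E: "eventually (\<lambda>m::nat. m \<ge> 1) sequentially" by (rule eventually_ge_at_top)
    have "eventually (\<lambda>m. P m \<omega>) sequentially"
      using C B D E asy_aux2
    proof eventually_elim
      fix m :: nat
      assume Cm: "(MAX i\<in>{1..m}. \<bar>x i \<omega> - W (real i) \<omega>\<bar>) \<le> C * real m powr (1/2 - \<delta>')"
        and Bm: "Su/3686400 * (real m)\<^sup>2 / ln (ln (real m)) \<le> (\<Sum>i=1..m. (W (real i) \<omega>)\<^sup>2)"
        and Dm: "(C\<^sup>2 + 1) * real m powr (2 - 2*\<delta>') \<le> c1/4 * (real m)\<^sup>2 / ln (ln (real m))"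
        and Em: "m \<ge> 1" and lp: "0 < ln (ln (real m))"
      have "c1/4 * (real m)\<^sup>2 / ln (ln (real m)) \<le> (\<Sum>i=1..m. (x i \<omega>)\<^sup>2)"
        by (rule final_pointwise[where W="\<lambda>i. W (real i) \<omega>", OF Em lp Cm _ Dm])
          (use Bm in \<open>simp add: c1_def\<close>)
      then show "P m \<omega>" by (simp add: P_def c0_def)
    qed
    then show "\<exists>N. \<forall>m\<ge>N. P m \<omega>" by (simp add: eventually_sequentially)
  qed
  have xm: "x i \<in> borel_measurable M" for i
  proof (induction i)
    case 0 then show ?case by (rule rv_x0)
  next
    case (Suc i)
    have "x (Suc i) = (\<lambda>\<omega>. x i \<omega> + u (Suc i) \<omega>)"
      by (rule ext) (simp add: rec[of "Suc i"])
    then show ?case using Suc rv_u by simp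
  qed
  define m0 where "m0 \<omega> = (LEAST N. \<forall>m\<ge>N. P m \<omega>)" for \<omega>
  have m0m: "m0 \<in> measurable M (count_space UNIV)"
  proof -
    note xm[measurable]
    show ?thesis unfolding m0_def P_def by measurable
  qed
  have "AE \<omega> in M. \<forall>m\<ge>m0 \<omega>. (\<Sum>i=1..m. (x i \<omega>)\<^sup>2) \<ge> c0 * (real m)\<^sup>2 / ln (ln (real m))"
    using good
  proof eventually_elim
    fix \<omega> assume "\<exists>N. \<forall>m\<ge>N. P m \<omega>"
    then have "\<forall>m\<ge>m0 \<omega>. P m \<omega>" unfolding m0_def by (rule LeastI_ex)
    then show "\<forall>m\<ge>m0 \<omega>. (\<Sum>i=1..m. (x i \<omega>)\<^sup>2) \<ge> c0 * (real m)\<^sup>2 / ln (ln (real m))"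
      by (simp add: P_def)
  qed
  then show ?thesis using c0p m0m by blast
qed

end
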